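(* Let $(S,\mathcal C)$ be a connectoid and $N,N'$ necklaces of $(S,\mathcal C)$. Then $N$ and $N'$ are equivalent if and only if there is an infinite family $(C_n)_{n\in\mathbb N}$ of pairwise disjoint finite connected sets such that each $C_n$ contains an element of $N$ and an element of $N'$.
   Context: A connectoid is given by a set $S$ and a set $\mathcal F$ of finite subsets of $S$ such that (i) $F\cup F'\in\mathcal F$ whenever $F,F'\in\mathcal F$ and $F\cap F'\neq\emptyset$, and (ii) $\emptyset\in\mathcal F$ and $\{s\}\in\mathcal F$ for every $s\in S$. A set $C\subseteq S$ is connected if for all $x,y\in C$ there is $F\in\mathcal F$ with $F\subseteq C$ and $x,y\in F$; $\mathcal C$ is the set of connected sets. For $S'\subseteq S$, a component of $S'$ is a maximal connected subset of $S'$, and $\mathcal K(S')$ is the set of components of $S'$. A necklace is a connected set $N$ for which there is a family $(H_n)_{n\in\mathbb N}$ of finite connected sets with $N=\bigcup_n H_n$ and $H_i\cap H_j\neq\emptyset$ iff $|i-j|\le 1$. For a necklace $N$ and finite $X\subseteq S$, the $X$-tail of $N$ is the unique element of $\mathcal K(N\setminus X)$ containing all but finitely many elements of $N$. Two necklaces are equivalent if for every finite $X\subseteq S$ their $X$-tails are contained in the same element of $\mathcal K(S\setminus X)$. *)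

theory Defs
  imports Main
begin

definition connectoid :: "'a set \<Rightarrow> 'a set set \<Rightarrow> bool" where
  "connectoid S \<F> \<longleftrightarrow>
     (\<forall>F\<in>\<F>. finite F \<and> F \<subseteq> S) \<and>
     (\<forall>F\<in>\<F>. \<forall>F'\<in>\<F>. F \<inter> F' \<noteq> {} \<longrightarrow> F \<union> F' \<in> \<F>) \<and>
     {} \<in> \<F> \<and> (\<forall>s\<in>S. {s} \<in> \<F>)"

definition cn_connected :: "'a set set \<Rightarrow> 'a set \<Rightarrow> bool" where
  "cn_connected \<F> C \<longleftrightarrow> (\<forall>x\<in>C. \<forall>y\<in>C. \<exists>F\<in>\<F>. F \<subseteq> C \<and> x \<in> F \<and> y \<in> F)"

definition cn_components :: "'a set set \<Rightarrow> 'a set \<Rightarrow> 'a set set" where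
  "cn_components \<F> S' = {C. C \<subseteq> S' \<and> cn_connected \<F> C \<and>
      (\<forall>D. C \<subseteq> D \<and> D \<subseteq> S' \<and> cn_connected \<F> D \<longrightarrow> D = C)}"

definition necklace :: "'a set set \<Rightarrow> 'a set \<Rightarrow> bool" where
  "necklace \<F> N \<longleftrightarrow> cn_connected \<F> N \<and>
     (\<exists>H :: nat \<Rightarrow> 'a set. (\<forall>n. finite (H n) \<and> cn_connected \<F> (H n)) \<and>
        N = (\<Union>n. H n) \<and>
        (\<forall>i j. H i \<inter> H j \<noteq> {} \<longleftrightarrow> (i \<le> j + 1 \<and> j \<le> i + 1)))"

definition necklace_tail :: "'a set set \<Rightarrow> 'a set \<Rightarrow> 'a set \<Rightarrow> 'a set" where
  "necklace_tail \<F> N X = (THE T. T \<in> cn_components \<F> (N - X) \<and> finite (N - T))"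

definition necklace_equiv :: "'a set \<Rightarrow> 'a set set \<Rightarrow> 'a set \<Rightarrow> 'a set \<Rightarrow> bool" where
  "necklace_equiv S \<F> N N' \<longleftrightarrow>
     (\<forall>X. finite X \<and> X \<subseteq> S \<longrightarrow>
        (\<exists>D\<in>cn_components \<F> (S - X).
           necklace_tail \<F> N X \<subseteq> D \<and> necklace_tail \<F> N' X \<subseteq> D))"

end

theory Submission
  imports Defs
begin

abbreviation "UC \<F> \<equiv> (\<forall>F\<in>\<F>. \<forall>F'\<in>\<F>. F \<inter> F' \<noteq> {} \<longrightarrow> F \<union> F' \<in> \<F>)"

lemma conn_union_pt:
  assumes uc: "UC \<F>"
    and A: "\<And>C. C \<in> A \<Longrightarrow> cn_connected \<F> C \<and> p \<in> C"
  shows "cn_connected \<F> (\<Union>A)"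
  unfolding cn_connected_def
proof (intro ballI)
  fix x y assume "x \<in> \<Union>A" "y \<in> \<Union>A"
  then obtain C1 C2 where c: "C1 \<in> A" "x \<in> C1" "C2 \<in> A" "y \<in> C2" by blast
  from A[OF c(1)] c(2) obtain F1 where f1: "F1 \<in> \<F>" "F1 \<subseteq> C1" "x \<in> F1" "p \<in> F1"
    unfolding cn_connected_def by blast
  from A[OF c(3)] c(4) obtain F2 where f2: "F2 \<in> \<F>" "F2 \<subseteq> C2" "p \<in> F2" "y \<in> F2"
    unfolding cn_connected_def by blast
  have "F1 \<union> F2 \<in> \<F>" using uc f1 f2 by blast
  moreover have "F1 \<union> F2 \<subseteq> \<Union>A" using f1 f2 c by blast
  ultimately show "\<exists>F\<in>\<F>. F \<subseteq> \<Union>A \<and> x \<in> F \<and> y \<in> F" using f1 f2 by blast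
qed

lemma conn_union2:
  assumes uc: "UC \<F>" and "cn_connected \<F> C1" "cn_connected \<F> C2" "C1 \<inter> C2 \<noteq> {}"
  shows "cn_connected \<F> (C1 \<union> C2)"
proof -
  obtain p where "p \<in> C1" "p \<in> C2" using assms(4) by blast
  then have "cn_connected \<F> (\<Union>{C1, C2})" using conn_union_pt[OF uc, of "{C1,C2}" p] assms by blast
  then show ?thesis by simp
qed

lemma comp_exists:
  assumes uc: "UC \<F>" and "C \<noteq> {}" "C \<subseteq> Y" "cn_connected \<F> C"
  shows "\<exists>K\<in>cn_components \<F> Y. C \<subseteq> K"
proof -
  obtain p where p: "p \<in> C" using assms by blast
  define K where "K = \<Union>{D. D \<subseteq> Y \<and> cn_connected \<F> D \<and> p \<in> D}"
  have Kc: "cn_connected \<F> K" unfolding K_def by (rule conn_union_pt[OF uc]) blast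
  have "K \<subseteq> Y" unfolding K_def by blast
  moreover have "C \<subseteq> K" unfolding K_def using assms p by blast
  moreover have "\<forall>D. K \<subseteq> D \<and> D \<subseteq> Y \<and> cn_connected \<F> D \<longrightarrow> D = K"
  proof (intro allI impI)
    fix D assume D: "K \<subseteq> D \<and> D \<subseteq> Y \<and> cn_connected \<F> D"
    have "p \<in> D" using D \<open>C \<subseteq> K\<close> p by blast
    then have "D \<subseteq> K" unfolding K_def using D by blast
    with D show "D = K" by blast
  qed
  ultimately show ?thesis using Kc unfolding cn_components_def by blast
qed

lemma comp_max:
  assumes "K \<in> cn_components \<F> Y" "K \<subseteq> D" "D \<subseteq> Y" "cn_connected \<F> D"
  shows "D = K"
  using assms unfolding cn_components_def by auto

lemma comp_sub:
  assumes "K \<in> cn_components \<F> Y"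
  shows "K \<subseteq> Y" "cn_connected \<F> K"
  using assms unfolding cn_components_def by auto

lemma comp_eq:
  assumes uc: "UC \<F>" and k: "K1 \<in> cn_components \<F> Y" "K2 \<in> cn_components \<F> Y" "K1 \<inter> K2 \<noteq> {}"
  shows "K1 = K2"
proof -
  have c: "cn_connected \<F> (K1 \<union> K2)"
    using conn_union2[OF uc comp_sub(2)[OF k(1)] comp_sub(2)[OF k(2)] k(3)] .
  have s: "K1 \<union> K2 \<subseteq> Y" using comp_sub(1)[OF k(1)] comp_sub(1)[OF k(2)] by blast
  have "K1 \<union> K2 = K1" by (rule comp_max[OF k(1) _ s c]) blast
  moreover have "K1 \<union> K2 = K2" by (rule comp_max[OF k(2) _ s c]) blast
  ultimately show ?thesis by blast
qed

lemma H_avoid: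
  fixes H :: "nat \<Rightarrow> 'a set"
  assumes H: "\<forall>i j. H i \<inter> H j \<noteq> {} \<longleftrightarrow> (i \<le> j + 1 \<and> j \<le> i + 1)"
    and X: "finite X"
  shows "\<exists>m. \<forall>n\<ge>m. H n \<inter> X = {}"
proof -
  have fin: "finite {n. x \<in> H n}" for x
  proof (cases "\<exists>i. x \<in> H i")
    case True
    then obtain i where "x \<in> H i" by blast
    have "n \<le> i+1" if "x \<in> H n" for n
    proof -
      have "H n \<inter> H i \<noteq> {}" using that \<open>x \<in> H i\<close> by blast
      then show ?thesis using H[rule_format, of n i] by blast
    qed
    then have "{n. x \<in> H n} \<subseteq> {..i+1}" by blast
    then show ?thesis by (rule finite_subset[OF _ finite_atMost])
  next
    case False then show ?thesis by simp
  qed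
  have "finite (\<Union>x\<in>X. {n. x \<in> H n})" using X fin by blast
  then obtain m where m: "\<forall>n\<in>(\<Union>x\<in>X. {n. x \<in> H n}). n < m"
    using finite_nat_set_iff_bounded by blast
  show ?thesis
  proof (intro exI allI impI)
    fix n assume "m \<le> n"
    then show "H n \<inter> X = {}" using m by fastforce
  qed
qed

lemma H_conn:
  fixes H :: "nat \<Rightarrow> 'a set"
  assumes uc: "UC \<F>" and H: "\<forall>i j. H i \<inter> H j \<noteq> {} \<longleftrightarrow> (i \<le> j + 1 \<and> j \<le> i + 1)"
    and Hc: "\<forall>n. cn_connected \<F> (H n)"
  shows "cn_connected \<F> (\<Union>n\<in>{m..}. H n)"
proof -
  have st: "cn_connected \<F> (\<Union>n\<in>{m..m+k}. H n)" for k
  proof (induction k)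
    case 0
    then show ?case using Hc by simp
  next
    case (Suc k)
    have eq: "(\<Union>n\<in>{m..m+Suc k}. H n) = (\<Union>n\<in>{m..m+k}. H n) \<union> H (m + Suc k)"
      by (auto simp: atLeastAtMostSuc_conv)
    have "H (m+k) \<inter> H (m + Suc k) \<noteq> {}" using H[rule_format, of "m+k" "m+Suc k"] by simp
    moreover have "H (m+k) \<subseteq> (\<Union>n\<in>{m..m+k}. H n)" by (rule UN_upper) simp
    ultimately have "(\<Union>n\<in>{m..m+k}. H n) \<inter> H (m + Suc k) \<noteq> {}" by blast
    then show ?case unfolding eq using conn_union2[OF uc] Suc.IH Hc by blast
  qed
  show ?thesis unfolding cn_connected_def
  proof (intro ballI)
    fix x y assume "x \<in> (\<Union>n\<in>{m..}. H n)" "y \<in> (\<Union>n\<in>{m..}. H n)"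
    then obtain a b where ab: "a \<ge> m" "x \<in> H a" "b \<ge> m" "y \<in> H b" by auto
    have sub: "(\<Union>n\<in>{m..m+(a+b)}. H n) \<subseteq> (\<Union>n\<in>{m..}. H n)" by auto
    have "x \<in> (\<Union>n\<in>{m..m+(a+b)}. H n)" "y \<in> (\<Union>n\<in>{m..m+(a+b)}. H n)" using ab by auto
    then obtain F where F: "F \<in> \<F>" "F \<subseteq> (\<Union>n\<in>{m..m+(a+b)}. H n)" "x \<in> F" "y \<in> F"
      using st[of "a+b"] unfolding cn_connected_def by meson
    have "F \<subseteq> (\<Union>n\<in>{m..}. H n)" using F(2) sub by (rule order_trans)
    then show "\<exists>F\<in>\<F>. F \<subseteq> (\<Union>n\<in>{m..}. H n) \<and> x \<in> F \<and> y \<in> F" using F by blast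
  qed
qed

lemma H_infinite:
  fixes H :: "nat \<Rightarrow> 'a set"
  assumes H: "\<forall>i j. H i \<inter> H j \<noteq> {} \<longleftrightarrow> (i \<le> j + 1 \<and> j \<le> i + 1)"
  shows "infinite (\<Union>n. H n)"
proof
  assume fin: "finite (\<Union>n. H n)"
  define f where "f n = (SOME x. x \<in> H (2*n))" for n
  have fn: "f n \<in> H (2*n)" for n
  proof -
    have "H (2*n) \<inter> H (2*n) \<noteq> {}" using H[rule_format, of "2*n" "2*n"] by simp
    then show ?thesis unfolding f_def by (metis Int_absorb ex_in_conv someI_ex)
  qed
  have "inj f"
  proof (rule injI)
    fix i j assume "f i = f j"
    then have "H (2*i) \<inter> H (2*j) \<noteq> {}" using fn by (metis disjoint_iff)
    then show "i = j" using H[rule_format, of "2*i" "2*j"] by simp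
  qed
  moreover have "range f \<subseteq> (\<Union>n. H n)" using fn by blast
  ultimately show False using fin
    by (meson finite_imageD finite_subset infinite_UNIV_nat)
qed

lemma tail_props:
  assumes uc: "UC \<F>" and nk: "necklace \<F> N" and X: "finite X"
  shows "necklace_tail \<F> N X \<in> cn_components \<F> (N - X) \<and> finite (N - necklace_tail \<F> N X)
     \<and> necklace_tail \<F> N X \<noteq> {}"
proof -
  have "\<exists>H :: nat \<Rightarrow> 'a set. (\<forall>n. finite (H n) \<and> cn_connected \<F> (H n)) \<and> N = (\<Union>n. H n)
    \<and> (\<forall>i j. H i \<inter> H j \<noteq> {} \<longleftrightarrow> (i \<le> j + 1 \<and> j \<le> i + 1))"
    using conjunct2[OF nk[unfolded necklace_def]] .
  then obtain H :: "nat \<Rightarrow> 'a set" where HH: "(\<forall>n. finite (H n) \<and> cn_connected \<F> (H n)) \<and> N = (\<Union>n. H n)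
    \<and> (\<forall>i j. H i \<inter> H j \<noteq> {} \<longleftrightarrow> (i \<le> j + 1 \<and> j \<le> i + 1))"
    ..
  note Hf = conjunct1[OF HH] and NH = conjunct1[OF conjunct2[OF HH]] and H = conjunct2[OF conjunct2[OF HH]]
  have inf: "infinite N" using H_infinite[OF H] NH by simp
  obtain m where m: "\<forall>n\<ge>m. H n \<inter> X = {}" using H_avoid[OF H X] by blast
  define U where "U = (\<Union>n\<in>{m..}. H n)"
  have Uc: "cn_connected \<F> U" unfolding U_def using H_conn[OF uc H] Hf by blast
  have "U \<subseteq> N - X" unfolding U_def NH using m by auto
  moreover have "U \<noteq> {}"
  proof -
    have "H m \<inter> H m \<noteq> {}" using H[rule_format, of m m] by simp
    then show ?thesis unfolding U_def by auto
  qed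
  ultimately obtain K where K: "K \<in> cn_components \<F> (N - X)" "U \<subseteq> K"
    using comp_exists[OF uc _ _ Uc] by blast
  have "N - K \<subseteq> (\<Union>n\<in>{..<m}. H n)"
  proof
    fix x assume "x \<in> N - K"
    then obtain n where "x \<in> H n" "x \<notin> K" unfolding NH by blast
    then have "n < m" using K(2) unfolding U_def by (meson UN_I atLeast_iff not_le subsetD)
    then show "x \<in> (\<Union>n\<in>{..<m}. H n)" using \<open>x \<in> H n\<close> by blast
  qed
  then have "finite (N - K)" using Hf by (meson finite_UN_I finite_lessThan finite_subset)
  define P where "P T = (T \<in> cn_components \<F> (N - X) \<and> finite (N - T))" for T
  have ex1: "\<exists>!T. P T"
  proof (rule ex1I)
    show "P K" unfolding P_def using K \<open>finite (N - K)\<close> by blast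
  next
    fix T assume "P T"
    have "T \<inter> K \<noteq> {}"
    proof
      assume "T \<inter> K = {}"
      then have "N \<subseteq> (N - T) \<union> (N - K)" by blast
      then show False using inf \<open>P T\<close> \<open>finite (N - K)\<close> unfolding P_def
        by (meson finite_UnI finite_subset)
    qed
    then show "T = K" using comp_eq[OF uc] \<open>P T\<close> K(1) unfolding P_def by blast
  qed
  have "P (necklace_tail \<F> N X)" unfolding necklace_tail_def P_def[symmetric]
    using theI'[OF ex1] .
  moreover have "necklace_tail \<F> N X \<noteq> {}" using calculation inf unfolding P_def by auto
  ultimately show ?thesis unfolding P_def by blast
qed

lemma conn_sub_S:
  assumes "connectoid S \<F>" "cn_connected \<F> C" shows "C \<subseteq> S"
proof
  fix x assume "x \<in> C"
  then obtain F where "F \<in> \<F>" "x \<in> F" using assms(2) unfolding cn_connected_def by blast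
  then show "x \<in> S" using assms(1) unfolding connectoid_def by blast
qed

lemma F_conn: "F \<in> \<F> \<Longrightarrow> cn_connected \<F> F" unfolding cn_connected_def by blast

theorem proposition2p1:
  fixes S :: "'a set" and \<F> :: "'a set set" and N N' :: "'a set"
  assumes "connectoid S \<F>"
    and "necklace \<F> N" and "necklace \<F> N'"
  shows "necklace_equiv S \<F> N N' \<longleftrightarrow>
    (\<exists>C :: nat \<Rightarrow> 'a set.
       (\<forall>n. finite (C n) \<and> cn_connected \<F> (C n) \<and> C n \<inter> N \<noteq> {} \<and> C n \<inter> N' \<noteq> {}) \<and>
       (\<forall>i j. i \<noteq> j \<longrightarrow> C i \<inter> C j = {}))"
proof -
  have uc: "UC \<F>" using assms(1) unfolding connectoid_def by blast
  have FS: "\<forall>F\<in>\<F>. finite F \<and> F \<subseteq> S" using assms(1) unfolding connectoid_def by blast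
  have NS: "N \<subseteq> S" "N' \<subseteq> S"
    using conn_sub_S[OF assms(1)] assms(2,3) unfolding necklace_def by blast+
  show ?thesis
  proof
    assume eq: "necklace_equiv S \<F> N N'"
    define P where "P X F = (F \<in> \<F> \<and> F \<inter> X = {} \<and> F \<inter> N \<noteq> {} \<and> F \<inter> N' \<noteq> {})" for X F
    have ex: "\<exists>F. P X F" if X: "finite X" "X \<subseteq> S" for X
    proof -
      obtain D where D: "D \<in> cn_components \<F> (S - X)" "necklace_tail \<F> N X \<subseteq> D"
          "necklace_tail \<F> N' X \<subseteq> D"
        using eq X unfolding necklace_equiv_def by blast
      have t1: "necklace_tail \<F> N X \<in> cn_components \<F> (N - X)" "necklace_tail \<F> N X \<noteq> {}"
        using tail_props[OF uc assms(2) X(1)] by blast+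
      have t2: "necklace_tail \<F> N' X \<in> cn_components \<F> (N' - X)" "necklace_tail \<F> N' X \<noteq> {}"
        using tail_props[OF uc assms(3) X(1)] by blast+
      obtain x where x: "x \<in> necklace_tail \<F> N X" using t1 by blast
      obtain y where y: "y \<in> necklace_tail \<F> N' X" using t2 by blast
      have xN: "x \<in> N" using x comp_sub(1)[OF t1(1)] by blast
      have yN: "y \<in> N'" using y comp_sub(1)[OF t2(1)] by blast
      have "x \<in> D" "y \<in> D" using x y D by blast+
      then obtain F where F: "F \<in> \<F>" "F \<subseteq> D" "x \<in> F" "y \<in> F"
        using comp_sub(2)[OF D(1)] unfolding cn_connected_def by meson
      have "F \<inter> X = {}" using F(2) comp_sub(1)[OF D(1)] by blast
      then have "P X F" unfolding P_def using F xN yN by blast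
      then show ?thesis by blast
    qed
    define G where "G X = (SOME F. P X F)" for X
    define Y where "Y = rec_nat {} (\<lambda>n Yn. Yn \<union> G Yn)"
    have Y0: "Y 0 = {}" by (simp add: Y_def)
    have YS: "Y (Suc n) = Y n \<union> G (Y n)" for n by (simp add: Y_def)
    have Yp: "finite (Y n) \<and> Y n \<subseteq> S \<and> P (Y n) (G (Y n))" for n
    proof (induction n)
      case 0
      have "P (Y 0) (G (Y 0))" unfolding G_def using ex[of "Y 0"] Y0 by (simp add: someI_ex)
      then show ?case using Y0 by simp
    next
      case (Suc n)
      have "G (Y n) \<in> \<F>" using Suc.IH unfolding P_def by blast
      then have "finite (Y (Suc n)) \<and> Y (Suc n) \<subseteq> S" using FS Suc.IH YS[of n] by auto
      moreover have "P (Y (Suc n)) (G (Y (Suc n)))" unfolding G_def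
        using ex[of "Y (Suc n)"] calculation by (simp add: someI_ex)
      ultimately show ?case by blast
    qed
    have mono: "Y i \<subseteq> Y (i + k)" for i k
      by (induction k) (auto simp: YS)
    have sub: "G (Y i) \<subseteq> Y j" if "i < j" for i j
    proof -
      have "Y (Suc i) \<subseteq> Y (Suc i + (j - Suc i))" by (rule mono)
      then show ?thesis using that YS[of i] by simp
    qed
    have disj: "G (Y i) \<inter> G (Y j) = {}" if "i < j" for i j
      using sub[OF that] Yp[of j] unfolding P_def by blast
    show "\<exists>C :: nat \<Rightarrow> 'a set.
       (\<forall>n. finite (C n) \<and> cn_connected \<F> (C n) \<and> C n \<inter> N \<noteq> {} \<and> C n \<inter> N' \<noteq> {}) \<and>
       (\<forall>i j. i \<noteq> j \<longrightarrow> C i \<inter> C j = {})"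
    proof (intro exI conjI allI impI)
      fix n
      have p: "P (Y n) (G (Y n))" using Yp by blast
      then show "finite (G (Y n))" "cn_connected \<F> (G (Y n))" "G (Y n) \<inter> N \<noteq> {}"
        "G (Y n) \<inter> N' \<noteq> {}" unfolding P_def using FS F_conn by blast+
    next
      fix i j :: nat assume "i \<noteq> j"
      then show "G (Y i) \<inter> G (Y j) = {}"
        using disj[of i j] disj[of j i] by (cases "i < j") auto
    qed
  next
    assume "\<exists>C :: nat \<Rightarrow> 'a set.
       (\<forall>n. finite (C n) \<and> cn_connected \<F> (C n) \<and> C n \<inter> N \<noteq> {} \<and> C n \<inter> N' \<noteq> {}) \<and>
       (\<forall>i j. i \<noteq> j \<longrightarrow> C i \<inter> C j = {})"
    then obtain C :: "nat \<Rightarrow> 'a set" where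
      C1: "\<forall>n. finite (C n) \<and> cn_connected \<F> (C n) \<and> C n \<inter> N \<noteq> {} \<and> C n \<inter> N' \<noteq> {}"
      and C2: "\<forall>i j. i \<noteq> j \<longrightarrow> C i \<inter> C j = {}" by blast
    show "necklace_equiv S \<F> N N'" unfolding necklace_equiv_def
    proof (intro allI impI)
      fix X assume X: "finite X \<and> X \<subseteq> S"
      define T where "T = necklace_tail \<F> N X"
      define T' where "T' = necklace_tail \<F> N' X"
      have t1: "T \<in> cn_components \<F> (N - X)" "finite (N - T)"
        using tail_props[OF uc assms(2)] X unfolding T_def by blast+
      have t2: "T' \<in> cn_components \<F> (N' - X)" "finite (N' - T')"
        using tail_props[OF uc assms(3)] X unfolding T'_def by blast+
      define Z where "Z = X \<union> (N - T) \<union> (N' - T')"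
      have Zf: "finite Z" unfolding Z_def using X t1 t2 by blast
      have fz: "finite {n. z \<in> C n}" for z
      proof (cases "\<exists>n. z \<in> C n")
        case True
        then obtain n where "z \<in> C n" by blast
        then have "{n. z \<in> C n} \<subseteq> {n}" using C2 by blast
        then show ?thesis by (rule finite_subset) simp
      next
        case False then show ?thesis by simp
      qed
      have "{n. C n \<inter> Z \<noteq> {}} \<subseteq> (\<Union>z\<in>Z. {n. z \<in> C n})" by blast
      then have "finite {n. C n \<inter> Z \<noteq> {}}" using Zf fz by (meson finite_UN_I finite_subset)
      then obtain n where "n \<notin> {n. C n \<inter> Z \<noteq> {}}"
        using ex_new_if_finite[OF infinite_UNIV_nat] by blast
      then have nZ: "C n \<inter> Z = {}" by simp
      obtain a where a: "a \<in> C n" "a \<in> N" using C1 by blast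
      obtain b where b: "b \<in> C n" "b \<in> N'" using C1 by blast
      have aT: "a \<in> T" using a nZ unfolding Z_def by blast
      have bT: "b \<in> T'" using b nZ unfolding Z_def by blast
      have c1: "cn_connected \<F> (T \<union> C n)"
        using conn_union2[OF uc comp_sub(2)[OF t1(1)]] C1 aT a(1) by blast
      have c2: "cn_connected \<F> ((T \<union> C n) \<union> T')"
        using conn_union2[OF uc c1 comp_sub(2)[OF t2(1)]] bT b(1) by blast
      have "C n \<subseteq> S" using conn_sub_S[OF assms(1)] C1 by blast
      moreover have "T \<subseteq> N - X" "T' \<subseteq> N' - X" using comp_sub(1) t1 t2 by blast+
      moreover have "C n \<inter> X = {}" using nZ unfolding Z_def by blast
      ultimately have W: "(T \<union> C n) \<union> T' \<subseteq> S - X" using NS by blast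
      obtain D where "D \<in> cn_components \<F> (S - X)" "(T \<union> C n) \<union> T' \<subseteq> D"
        using comp_exists[OF uc _ W c2] aT by blast
      then show "\<exists>D\<in>cn_components \<F> (S - X). T \<subseteq> D \<and> T' \<subseteq> D" by blast
    qed
  qed
qed

end
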